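(* Let $(\lambda^*,\mathbf{s}^{-*},\mathbf{s}^{+*},\delta^*,\boldsymbol{\alpha}^*,\gamma^* )$ be an optimal solution of model (MIP) (defined in the context). Then $\lambda^*/\delta^*$ is a maximal element of $\Omega_o$, i.e. $\lambda^*/\delta^*\in\Omega_o$ and it has the maximum number of positive components among all elements of $\Omega_o$.
   Context: Data envelopment analysis setting. There are $n$ decision making units (DMUs) indexed by $J=\{1,\dots,n\}$, each using $m$ inputs to produce $s$ outputs; DMU$_j$ has input vector $\mathbf{x}_j=(x_{1j},\dots,x_{mj})^T\in\mathbb{R}^m_+$ and output vector $\mathbf{y}_j=(y_{1j},\dots,y_{sj})^T\in\mathbb{R}^s_+$; $\mathbf{X}=[\mathbf{x}_1\cdots\mathbf{x}_n]$, $\mathbf{Y}=[\mathbf{y}_1\cdots\mathbf{y}_n]$. Define $\mathbf{R}^-=(R^-_1,\dots,R^-_m)^T$, $\mathbf{R}^+=(R^+_1,\dots,R^+_s)^T$ by $1/R^-_i=\max_{j}x_{ij}-\min_j x_{ij}$ and $1/R^+_r=\max_j y_{rj}-\min_j y_{rj}$. For $o\in J$, the RAM model is: $\rho_o=\min\, 1-\frac{1}{m+s}(\mathbf{R}^{-T}\mathbf{s}^-+\mathbf{R}^{+T}\mathbf{s}^+)$ subject to $\mathbf{X}\lambda+\mathbf{s}^-=\mathbf{x}_o$, $\mathbf{Y}\lambda-\mathbf{s}^+=\mathbf{y}_o$, $\mathbf{1}^T\lambda=1$, $\lambda\ge 0,\mathbf{s}^-\ge0,\mathbf{s}^+\ge0$.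 A DMU is RAM-efficient if its optimal value $\rho$ equals $1$; let $E\subseteq J$ be the index set of RAM-efficient DMUs and $\mathbf{X}_E,\mathbf{Y}_E$ the submatrices of $\mathbf{X},\mathbf{Y}$ with columns in $E$. Fix the evaluated DMU $o\in J$. System (S): vectors $\lambda\in\mathbb{R}^{|E|}$, $\mathbf{s}^-\in\mathbb{R}^m$, $\mathbf{s}^+\in\mathbb{R}^s$, all nonnegative, with $\mathbf{X}_E\lambda+\mathbf{s}^-=\mathbf{x}_o$, $\mathbf{Y}_E\lambda-\mathbf{s}^+=\mathbf{y}_o$, $\mathbf{1}^T\lambda=1$, $\mathbf{R}^{-T}\mathbf{s}^-+\mathbf{R}^{+T}\mathbf{s}^+=(m+s)(1-\rho_o)$. Let $\Omega_o$ be the set of all $\lambda$ for which there exist $\mathbf{s}^-,\mathbf{s}^+$ such that $(\lambda,\mathbf{s}^-,\mathbf{s}^+)$ satisfies (S). A maximal element of $\Omega_o$ is an element of $\Omega_o$ with the maximum number of positive components. Model (MIP): maximize $\mathbf{1}^T\boldsymbol{\alpha}+\gamma$ over $\lambda\in\mathbb{R}^{|E|}$, $\mathbf{s}^-\in\mathbb{R}^m$, $\mathbf{s}^+\in\mathbb{R}^s$, $\delta\in\mathbb{R}$, $\boldsymbol{\alpha}\in\{0,1\}^{|E|}$, $\gamma\in\{0,1\}$ subject to $\mathbf{X}_E\lambda+\mathbf{s}^--\mathbf{x}_o\delta=\mathbf{0}$, $\mathbf{Y}_E\lambda-\mathbf{s}^+-\mathbf{y}_o\delta=\mathbf{0}$,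 $\mathbf{1}^T\lambda-\delta=0$, $\mathbf{R}^{-T}\mathbf{s}^-+\mathbf{R}^{+T}\mathbf{s}^+-(m+s)(1-\rho_o)\delta=0$, $\boldsymbol{\alpha}\le\lambda$, $\gamma\le\delta$, $\lambda\ge\mathbf{0}$, $\mathbf{s}^-\ge\mathbf{0}$, $\mathbf{s}^+\ge\mathbf{0}$, $\delta\ge0$. *)

theory Defs
  imports Main "HOL-Analysis.Analysis"
begin

text \<open>DMUs are indexed by a finite type 'j, inputs by a finite type 'i,
  outputs by a finite type 'r.  X i j = x_{ij}, Y r j = y_{rj}.\<close>

definition Rminus :: "('i::finite \<Rightarrow> 'j::finite \<Rightarrow> real) \<Rightarrow> 'i \<Rightarrow> real" where
  "Rminus X i = inverse (Max (range (X i)) - Min (range (X i)))"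

definition Rplus :: "('r::finite \<Rightarrow> 'j::finite \<Rightarrow> real) \<Rightarrow> 'r \<Rightarrow> real" where
  "Rplus Y r = inverse (Max (range (Y r)) - Min (range (Y r)))"

definition ram_feasible ::
  "('i::finite \<Rightarrow> 'j::finite \<Rightarrow> real) \<Rightarrow> ('r::finite \<Rightarrow> 'j \<Rightarrow> real) \<Rightarrow> 'j
   \<Rightarrow> ('j \<Rightarrow> real) \<Rightarrow> ('i \<Rightarrow> real) \<Rightarrow> ('r \<Rightarrow> real) \<Rightarrow> bool" where
  "ram_feasible X Y dmu lam sm sp \<longleftrightarrow>
     (\<forall>i. (\<Sum>j\<in>UNIV. X i j * lam j) + sm i = X i dmu) \<and>
     (\<forall>r. (\<Sum>j\<in>UNIV. Y r j * lam j) - sp r = Y r dmu) \<and>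
     (\<Sum>j\<in>UNIV. lam j) = 1 \<and>
     (\<forall>j. lam j \<ge> 0) \<and> (\<forall>i. sm i \<ge> 0) \<and> (\<forall>r. sp r \<ge> 0)"

definition ram_obj ::
  "('i::finite \<Rightarrow> 'j::finite \<Rightarrow> real) \<Rightarrow> ('r::finite \<Rightarrow> 'j \<Rightarrow> real)
   \<Rightarrow> ('i \<Rightarrow> real) \<Rightarrow> ('r \<Rightarrow> real) \<Rightarrow> real" where
  "ram_obj X Y sm sp = 1 - ((\<Sum>i\<in>UNIV. Rminus X i * sm i) + (\<Sum>r\<in>UNIV. Rplus Y r * sp r))
                             / (real CARD('i) + real CARD('r))"

definition ram_rho ::
  "('i::finite \<Rightarrow> 'j::finite \<Rightarrow> real) \<Rightarrow> ('r::finite \<Rightarrow> 'j \<Rightarrow> real) \<Rightarrow> 'j \<Rightarrow> real" where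
  "ram_rho X Y dmu = Inf {ram_obj X Y sm sp | lam sm sp. ram_feasible X Y dmu lam sm sp}"

definition ram_E ::
  "('i::finite \<Rightarrow> 'j::finite \<Rightarrow> real) \<Rightarrow> ('r::finite \<Rightarrow> 'j \<Rightarrow> real) \<Rightarrow> 'j set" where
  "ram_E X Y = {j. ram_rho X Y j = 1}"

text \<open>Vectors in R^|E| are represented as functions 'j => real vanishing outside E.
  System (S) for the evaluated DMU o.\<close>
definition systemS ::
  "('i::finite \<Rightarrow> 'j::finite \<Rightarrow> real) \<Rightarrow> ('r::finite \<Rightarrow> 'j \<Rightarrow> real) \<Rightarrow> 'j
   \<Rightarrow> ('j \<Rightarrow> real) \<Rightarrow> ('i \<Rightarrow> real) \<Rightarrow> ('r \<Rightarrow> real) \<Rightarrow> bool" where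
  "systemS X Y dmu lam sm sp \<longleftrightarrow>
     (\<forall>j. j \<notin> ram_E X Y \<longrightarrow> lam j = 0) \<and>
     (\<forall>j\<in>ram_E X Y. lam j \<ge> 0) \<and> (\<forall>i. sm i \<ge> 0) \<and> (\<forall>r. sp r \<ge> 0) \<and>
     (\<forall>i. (\<Sum>j\<in>ram_E X Y. X i j * lam j) + sm i = X i dmu) \<and>
     (\<forall>r. (\<Sum>j\<in>ram_E X Y. Y r j * lam j) - sp r = Y r dmu) \<and>
     (\<Sum>j\<in>ram_E X Y. lam j) = 1 \<and>
     (\<Sum>i\<in>UNIV. Rminus X i * sm i) + (\<Sum>r\<in>UNIV. Rplus Y r * sp r)
        = (real CARD('i) + real CARD('r)) * (1 - ram_rho X Y dmu)"

definition Omega ::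
  "('i::finite \<Rightarrow> 'j::finite \<Rightarrow> real) \<Rightarrow> ('r::finite \<Rightarrow> 'j \<Rightarrow> real) \<Rightarrow> 'j \<Rightarrow> ('j \<Rightarrow> real) set" where
  "Omega X Y dmu = {lam. \<exists>sm sp. systemS X Y dmu lam sm sp}"

definition num_pos :: "'j set \<Rightarrow> ('j \<Rightarrow> real) \<Rightarrow> nat" where
  "num_pos E lam = card {j\<in>E. lam j > 0}"

definition maximal_elem ::
  "('i::finite \<Rightarrow> 'j::finite \<Rightarrow> real) \<Rightarrow> ('r::finite \<Rightarrow> 'j \<Rightarrow> real) \<Rightarrow> 'j \<Rightarrow> ('j \<Rightarrow> real) \<Rightarrow> bool" where
  "maximal_elem X Y dmu lam \<longleftrightarrow> lam \<in> Omega X Y dmu \<and>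
     (\<forall>mu\<in>Omega X Y dmu. num_pos (ram_E X Y) mu \<le> num_pos (ram_E X Y) lam)"

definition mip_feasible ::
  "('i::finite \<Rightarrow> 'j::finite \<Rightarrow> real) \<Rightarrow> ('r::finite \<Rightarrow> 'j \<Rightarrow> real) \<Rightarrow> 'j
   \<Rightarrow> ('j \<Rightarrow> real) \<Rightarrow> ('i \<Rightarrow> real) \<Rightarrow> ('r \<Rightarrow> real) \<Rightarrow> real \<Rightarrow> ('j \<Rightarrow> real) \<Rightarrow> real \<Rightarrow> bool" where
  "mip_feasible X Y dmu lam sm sp \<delta> \<alpha> \<gamma> \<longleftrightarrow>
     (\<forall>j. j \<notin> ram_E X Y \<longrightarrow> lam j = 0 \<and> \<alpha> j = 0) \<and>
     (\<forall>i. (\<Sum>j\<in>ram_E X Y. X i j * lam j) + sm i - X i dmu * \<delta> = 0) \<and>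
     (\<forall>r. (\<Sum>j\<in>ram_E X Y. Y r j * lam j) - sp r - Y r dmu * \<delta> = 0) \<and>
     (\<Sum>j\<in>ram_E X Y. lam j) - \<delta> = 0 \<and>
     (\<Sum>i\<in>UNIV. Rminus X i * sm i) + (\<Sum>r\<in>UNIV. Rplus Y r * sp r)
        - (real CARD('i) + real CARD('r)) * (1 - ram_rho X Y dmu) * \<delta> = 0 \<and>
     (\<forall>j\<in>ram_E X Y. \<alpha> j \<le> lam j) \<and> \<gamma> \<le> \<delta> \<and>
     (\<forall>j\<in>ram_E X Y. lam j \<ge> 0) \<and> (\<forall>i. sm i \<ge> 0) \<and> (\<forall>r. sp r \<ge> 0) \<and> \<delta> \<ge> 0 \<and>
     (\<forall>j\<in>ram_E X Y. \<alpha> j \<in> {0, 1}) \<and> \<gamma> \<in> {0, 1}"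

definition mip_obj :: "'j set \<Rightarrow> ('j \<Rightarrow> real) \<Rightarrow> real \<Rightarrow> real" where
  "mip_obj E \<alpha> \<gamma> = (\<Sum>j\<in>E. \<alpha> j) + \<gamma>"

definition mip_optimal ::
  "('i::finite \<Rightarrow> 'j::finite \<Rightarrow> real) \<Rightarrow> ('r::finite \<Rightarrow> 'j \<Rightarrow> real) \<Rightarrow> 'j
   \<Rightarrow> ('j \<Rightarrow> real) \<Rightarrow> ('i \<Rightarrow> real) \<Rightarrow> ('r \<Rightarrow> real) \<Rightarrow> real \<Rightarrow> ('j \<Rightarrow> real) \<Rightarrow> real \<Rightarrow> bool" where
  "mip_optimal X Y dmu lam sm sp \<delta> \<alpha> \<gamma> \<longleftrightarrow>
     mip_feasible X Y dmu lam sm sp \<delta> \<alpha> \<gamma> \<and>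
     (\<forall>lam' sm' sp' \<delta>' \<alpha>' \<gamma>'. mip_feasible X Y dmu lam' sm' sp' \<delta>' \<alpha>' \<gamma>' \<longrightarrow>
        mip_obj (ram_E X Y) \<alpha>' \<gamma>' \<le> mip_obj (ram_E X Y) \<alpha> \<gamma>)"

end

theory Submission
  imports Defs "HOL-Analysis.Analysis"
begin


definition Fo :: "('i::finite \<Rightarrow> 'j::finite \<Rightarrow> real) \<Rightarrow> ('r::finite \<Rightarrow> 'j \<Rightarrow> real) \<Rightarrow> 'j \<Rightarrow> ('j \<Rightarrow> real) \<Rightarrow> real" where
  "Fo X Y dmu lam = (\<Sum>i\<in>UNIV. Rminus X i * (X i dmu - (\<Sum>j\<in>UNIV. X i j * lam j)))
     + (\<Sum>r\<in>UNIV. Rplus Y r * ((\<Sum>j\<in>UNIV. Y r j * lam j) - Y r dmu))"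

definition Pf :: "('i::finite \<Rightarrow> 'j::finite \<Rightarrow> real) \<Rightarrow> ('r::finite \<Rightarrow> 'j \<Rightarrow> real) \<Rightarrow> 'j \<Rightarrow> ('j \<Rightarrow> real) set" where
  "Pf X Y dmu = {lam. (\<forall>j. lam j \<ge> 0) \<and> (\<Sum>j\<in>UNIV. lam j) = 1 \<and>
      (\<forall>i. (\<Sum>j\<in>UNIV. X i j * lam j) \<le> X i dmu) \<and> (\<forall>r. (\<Sum>j\<in>UNIV. Y r j * lam j) \<ge> Y r dmu)}"

lemma ind_in_Pf: "(\<lambda>k. if k = dmu then 1 else 0) \<in> Pf X Y dmu"
  by (simp add: Pf_def if_distrib cong: if_cong)

lemma Fo_ind: "Fo X Y dmu (\<lambda>k. if k = dmu then 1 else 0) = 0"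
  by (simp add: Fo_def if_distrib cong: if_cong)

lemma attain:
  fixes X :: "'i::finite \<Rightarrow> 'j::finite \<Rightarrow> real" and Y :: "'r::finite \<Rightarrow> 'j \<Rightarrow> real"
  shows "\<exists>lam0\<in>Pf X Y dmu. \<forall>lam\<in>Pf X Y dmu. Fo X Y dmu lam \<le> Fo X Y dmu lam0"
proof -
  define K where "K = {v::real^'j. (\<forall>j. v$j \<ge> 0) \<and> (\<Sum>j\<in>UNIV. v$j) = 1 \<and>
      (\<forall>i. (\<Sum>j\<in>UNIV. X i j * v$j) \<le> X i dmu) \<and> (\<forall>r. (\<Sum>j\<in>UNIV. Y r j * v$j) \<ge> Y r dmu)}"
  have KP: "v \<in> K \<longleftrightarrow> vec_nth v \<in> Pf X Y dmu" for v
    by (simp add: K_def Pf_def)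
  have cl: "closed K" unfolding K_def
    by (intro closed_Collect_conj closed_Collect_all closed_Collect_le closed_Collect_eq continuous_intros)
  have "K \<subseteq> cbox 0 1"
  proof
    fix v assume v: "v \<in> K"
    have "v$j \<le> 1" for j
    proof -
      have "v$j \<le> (\<Sum>k\<in>UNIV. v$k)" using v unfolding K_def
        by (intro member_le_sum) auto
      thus ?thesis using v unfolding K_def by simp
    qed
    thus "v \<in> cbox 0 1" using v unfolding K_def by (simp add: mem_box_cart)
  qed
  hence "bounded K" by (meson bounded_cbox bounded_subset)
  with cl have cK: "compact K" by (simp add: compact_eq_bounded_closed)
  have "vec_lambda (\<lambda>k. if k = dmu then 1 else 0) \<in> K" using ind_in_Pf[of dmu X Y] by (simp add: KP vec_lambda_inverse)
  hence ne: "K \<noteq> {}" by auto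
  have co: "continuous_on K (\<lambda>v. Fo X Y dmu (vec_nth v))"
    unfolding Fo_def by (intro continuous_intros)
  from continuous_attains_sup[OF cK ne co] obtain v0 where
    v0: "v0 \<in> K" "\<forall>y\<in>K. Fo X Y dmu (vec_nth y) \<le> Fo X Y dmu (vec_nth v0)" by blast
  show ?thesis
  proof (intro bexI[of _ "vec_nth v0"] ballI)
    show "vec_nth v0 \<in> Pf X Y dmu" using v0 KP by blast
    fix lam assume "lam \<in> Pf X Y dmu"
    hence "vec_lambda lam \<in> K" using KP by (simp add: vec_lambda_inverse)
    thus "Fo X Y dmu lam \<le> Fo X Y dmu (vec_nth v0)" using v0(2) by (metis vec_lambda_inverse UNIV_I)
  qed
qed

lemma Cpos: "real CARD('i::finite) + real CARD('r::finite) > 0"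
  by (simp add: add_pos_pos)

lemma feas_iff:
  "ram_feasible X Y dmu lam sm sp \<longleftrightarrow> lam \<in> Pf X Y dmu \<and>
     sm = (\<lambda>i. X i dmu - (\<Sum>j\<in>UNIV. X i j * lam j)) \<and> sp = (\<lambda>r. (\<Sum>j\<in>UNIV. Y r j * lam j) - Y r dmu)"
  unfolding ram_feasible_def Pf_def apply (auto simp: fun_eq_iff algebra_simps)
  by (smt (verit))+

lemma obj_Fo:
  fixes X :: "'i::finite \<Rightarrow> 'j::finite \<Rightarrow> real" and Y :: "'r::finite \<Rightarrow> 'j \<Rightarrow> real"
  shows "ram_obj X Y (\<lambda>i. X i dmu - (\<Sum>j\<in>UNIV. X i j * lam j)) (\<lambda>r. (\<Sum>j\<in>UNIV. Y r j * lam j) - Y r dmu)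
    = 1 - Fo X Y dmu lam / (real CARD('i) + real CARD('r))"
  by (simp add: ram_obj_def Fo_def)

lemma rho_eq:
  fixes X :: "'i::finite \<Rightarrow> 'j::finite \<Rightarrow> real" and Y :: "'r::finite \<Rightarrow> 'j \<Rightarrow> real"
  assumes "lam0 \<in> Pf X Y dmu" "\<forall>lam\<in>Pf X Y dmu. Fo X Y dmu lam \<le> Fo X Y dmu lam0"
  shows "ram_rho X Y dmu = 1 - Fo X Y dmu lam0 / (real CARD('i) + real CARD('r))"
  unfolding ram_rho_def
proof (rule cInf_eq_minimum)
  show "1 - Fo X Y dmu lam0 / (real CARD('i) + real CARD('r))
    \<in> {ram_obj X Y sm sp |lam sm sp. ram_feasible X Y dmu lam sm sp}"
    using assms(1) by (auto simp: feas_iff obj_Fo)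
  fix y assume "y \<in> {ram_obj X Y sm sp |lam sm sp. ram_feasible X Y dmu lam sm sp}"
  then obtain lam where l: "lam \<in> Pf X Y dmu" and y: "y = 1 - Fo X Y dmu lam / (real CARD('i) + real CARD('r))"
    by (auto simp: feas_iff obj_Fo)
  have "Fo X Y dmu lam / (real CARD('i) + real CARD('r)) \<le> Fo X Y dmu lam0 / (real CARD('i) + real CARD('r))"
    using assms(2) l Cpos[where 'i='i and 'r='r] by (intro divide_right_mono) auto
  thus "1 - Fo X Y dmu lam0 / (real CARD('i) + real CARD('r)) \<le> y" using y by simp
qed


lemma rho1_iff:
  fixes X :: "'i::finite \<Rightarrow> 'j::finite \<Rightarrow> real" and Y :: "'r::finite \<Rightarrow> 'j \<Rightarrow> real"
  shows "ram_rho X Y j = 1 \<longleftrightarrow> (\<forall>\<mu>\<in>Pf X Y j. Fo X Y j \<mu> \<le> 0)"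
proof -
  obtain lam0 where l0: "lam0 \<in> Pf X Y j" "\<forall>lam\<in>Pf X Y j. Fo X Y j lam \<le> Fo X Y j lam0"
    using attain by blast
  have r: "ram_rho X Y j = 1 - Fo X Y j lam0 / (real CARD('i) + real CARD('r))"
    by (rule rho_eq[OF l0])
  have ge: "Fo X Y j lam0 \<ge> 0" using l0(2) ind_in_Pf[of j X Y] Fo_ind[of X Y j] by force
  have C: "real CARD('i) + real CARD('r) > 0" by (rule Cpos)
  have "ram_rho X Y j = 1 \<longleftrightarrow> Fo X Y j lam0 = 0" using r C by auto
  also have "\<dots> \<longleftrightarrow> (\<forall>\<mu>\<in>Pf X Y j. Fo X Y j \<mu> \<le> 0)"
    using ge l0 by force
  finally show ?thesis .
qed



lemma inner_step:
  fixes a :: "'j::finite \<Rightarrow> real"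
  shows "(\<Sum>k\<in>UNIV. a k * (lam k + c * \<mu> k - (if k = j then c else 0)))
     = (\<Sum>k\<in>UNIV. a k * lam k) + c * (\<Sum>k\<in>UNIV. a k * \<mu> k) - c * a j"
proof -
  have "(\<Sum>k\<in>UNIV. a k * (lam k + c * \<mu> k - (if k = j then c else 0)))
     = (\<Sum>k\<in>UNIV. a k * lam k + c * (a k * \<mu> k) - (if k = j then c * a j else 0))"
    by (intro sum.cong) (auto simp: algebra_simps)
  also have "\<dots> = (\<Sum>k\<in>UNIV. a k * lam k) + c * (\<Sum>k\<in>UNIV. a k * \<mu> k) - c * a j"
    by (simp add: sum.distrib sum_subtractf sum_distrib_left)
  finally show ?thesis .
qed

lemma Fo_step:
  "Fo X Y dmu (\<lambda>k. lam k + c * \<mu> k - (if k = j then c else 0)) = Fo X Y dmu lam + c * Fo X Y j \<mu>"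
proof -
  have a: "(\<Sum>i\<in>UNIV. Rminus X i * (X i dmu - (\<Sum>k\<in>UNIV. X i k * (lam k + c * \<mu> k - (if k = j then c else 0)))))
    = (\<Sum>i\<in>UNIV. Rminus X i * (X i dmu - (\<Sum>k\<in>UNIV. X i k * lam k)) + c * (Rminus X i * (X i j - (\<Sum>k\<in>UNIV. X i k * \<mu> k))))"
    unfolding inner_step by (intro sum.cong refl) (simp add: algebra_simps)
  have b: "(\<Sum>r\<in>UNIV. Rplus Y r * ((\<Sum>k\<in>UNIV. Y r k * (lam k + c * \<mu> k - (if k = j then c else 0))) - Y r dmu))
    = (\<Sum>r\<in>UNIV. Rplus Y r * ((\<Sum>k\<in>UNIV. Y r k * lam k) - Y r dmu) + c * (Rplus Y r * ((\<Sum>k\<in>UNIV. Y r k * \<mu> k) - Y r j)))"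
    unfolding inner_step by (intro sum.cong refl) (simp add: ring_distribs)
  show ?thesis unfolding Fo_def a b sum.distrib sum_distrib_left[symmetric] by (simp add: ring_distribs)
qed



lemma Pf_step:
  assumes "lam \<in> Pf X Y dmu" "\<mu> \<in> Pf X Y j" "0 \<le> c" "c \<le> lam j"
  shows "(\<lambda>k. lam k + c * \<mu> k - (if k = j then c else 0)) \<in> Pf X Y dmu"
proof -
  have n: "\<forall>k. lam k + c * \<mu> k - (if k = j then c else 0) \<ge> 0"
  proof
    fix k
    have "0 \<le> c * \<mu> k" using assms unfolding Pf_def by auto
    moreover have "lam k \<ge> 0" using assms unfolding Pf_def by auto
    ultimately show "lam k + c * \<mu> k - (if k = j then c else 0) \<ge> 0" using assms(4) by auto
  qed
  have s: "(\<Sum>k\<in>UNIV. lam k + c * \<mu> k - (if k = j then c else 0)) = 1"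
    using inner_step[of "\<lambda>_. 1" lam c \<mu> j] assms unfolding Pf_def by simp
  have x: "(\<Sum>k\<in>UNIV. X i k * (lam k + c * \<mu> k - (if k = j then c else 0))) \<le> X i dmu" for i
  proof -
    have "(\<Sum>k\<in>UNIV. X i k * \<mu> k) \<le> X i j" "(\<Sum>k\<in>UNIV. X i k * lam k) \<le> X i dmu"
      using assms unfolding Pf_def by auto
    hence "c * (\<Sum>k\<in>UNIV. X i k * \<mu> k) \<le> c * X i j" using assms(3) by (simp add: mult_left_mono)
    thus ?thesis unfolding inner_step using \<open>(\<Sum>k\<in>UNIV. X i k * lam k) \<le> X i dmu\<close> by linarith
  qed
  have y: "(\<Sum>k\<in>UNIV. Y r k * (lam k + c * \<mu> k - (if k = j then c else 0))) \<ge> Y r dmu" for r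
  proof -
    have "(\<Sum>k\<in>UNIV. Y r k * \<mu> k) \<ge> Y r j" "(\<Sum>k\<in>UNIV. Y r k * lam k) \<ge> Y r dmu"
      using assms unfolding Pf_def by auto
    hence "c * (\<Sum>k\<in>UNIV. Y r k * \<mu> k) \<ge> c * Y r j" using assms(3) by (simp add: mult_left_mono)
    thus ?thesis unfolding inner_step using \<open>(\<Sum>k\<in>UNIV. Y r k * lam k) \<ge> Y r dmu\<close> by linarith
  qed
  show ?thesis using n s x y unfolding Pf_def by simp
qed



lemma support:
  assumes "lam0 \<in> Pf X Y dmu" "\<forall>lam\<in>Pf X Y dmu. Fo X Y dmu lam \<le> Fo X Y dmu lam0"
    and "lam0 j > 0"
  shows "j \<in> ram_E X Y"
proof (rule ccontr)
  assume "j \<notin> ram_E X Y"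
  hence "ram_rho X Y j \<noteq> 1" by (simp add: ram_E_def)
  then obtain \<mu> where mu: "\<mu> \<in> Pf X Y j" "Fo X Y j \<mu> > 0" using rho1_iff by force
  have "(\<lambda>k. lam0 k + lam0 j * \<mu> k - (if k = j then lam0 j else 0)) \<in> Pf X Y dmu"
    using Pf_step[OF assms(1) mu(1)] assms(3) by simp
  hence "Fo X Y dmu (\<lambda>k. lam0 k + lam0 j * \<mu> k - (if k = j then lam0 j else 0)) \<le> Fo X Y dmu lam0"
    using assms(2) by blast
  hence "Fo X Y dmu lam0 + lam0 j * Fo X Y j \<mu> \<le> Fo X Y dmu lam0"
    by (simp only: Fo_step)
  moreover have "lam0 j * Fo X Y j \<mu> > 0" using mu assms(3) by simp
  ultimately show False by simp
qed




lemma sum_ind: "finite E \<Longrightarrow> (\<Sum>j\<in>E. if P j then (1::real) else 0) = real (card {j\<in>E. P j})"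
  by (simp add: sum.inter_filter[symmetric])

lemma sum_E:
  fixes g :: "'j::finite \<Rightarrow> real"
  assumes "\<forall>j. j \<notin> E \<longrightarrow> lam j = 0"
  shows "(\<Sum>j\<in>E. g j * lam j) = (\<Sum>j\<in>UNIV. g j * lam j)" "(\<Sum>j\<in>E. lam j) = (\<Sum>j\<in>UNIV. lam j)"
  using assms by (auto intro!: sum.mono_neutral_left)

lemma Omega_ne:
  fixes X :: "'i::finite \<Rightarrow> 'j::finite \<Rightarrow> real" and Y :: "'r::finite \<Rightarrow> 'j \<Rightarrow> real"
  shows "Omega X Y dmu \<noteq> {}"
proof -
  obtain lam0 where l0: "lam0 \<in> Pf X Y dmu" "\<forall>lam\<in>Pf X Y dmu. Fo X Y dmu lam \<le> Fo X Y dmu lam0"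
    using attain by blast
  have r: "ram_rho X Y dmu = 1 - Fo X Y dmu lam0 / (real CARD('i) + real CARD('r))"
    by (rule rho_eq[OF l0])
  have C: "real CARD('i) + real CARD('r) > 0" by (rule Cpos)
  have nn: "\<forall>j. lam0 j \<ge> 0" using l0(1) unfolding Pf_def by auto
  have z: "\<forall>j. j \<notin> ram_E X Y \<longrightarrow> lam0 j = 0"
  proof (intro allI impI)
    fix j assume "j \<notin> ram_E X Y"
    hence "\<not> lam0 j > 0" using support[OF l0] by blast
    thus "lam0 j = 0" using nn[rule_format, of j] by linarith
  qed
  define sm where "sm = (\<lambda>i. X i dmu - (\<Sum>j\<in>UNIV. X i j * lam0 j))"
  define sp where "sp = (\<lambda>r. (\<Sum>j\<in>UNIV. Y r j * lam0 j) - Y r dmu)"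
  have G: "(\<Sum>i\<in>UNIV. Rminus X i * sm i) + (\<Sum>r\<in>UNIV. Rplus Y r * sp r)
        = (real CARD('i) + real CARD('r)) * (1 - ram_rho X Y dmu)"
    using C unfolding r sm_def sp_def Fo_def[symmetric] by simp
  have "systemS X Y dmu lam0 sm sp"
    unfolding systemS_def sum_E[OF z] using z nn G l0(1) unfolding Pf_def sm_def sp_def by auto
  thus ?thesis unfolding Omega_def by blast
qed

lemma Omega_mip:
  fixes X :: "'i::finite \<Rightarrow> 'j::finite \<Rightarrow> real" and Y :: "'r::finite \<Rightarrow> 'j \<Rightarrow> real"
  assumes "mu \<in> Omega X Y dmu"
  shows "\<exists>lam' sm' sp' \<delta>' \<alpha>'. mip_feasible X Y dmu lam' sm' sp' \<delta>' \<alpha>' 1 \<and>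
      mip_obj (ram_E X Y) \<alpha>' 1 = real (num_pos (ram_E X Y) mu) + 1"
proof -
  let ?E = "ram_E X Y"
  obtain sm sp where S: "systemS X Y dmu mu sm sp" using assms unfolding Omega_def by blast
  define t where "t = 1 + (\<Sum>j\<in>UNIV. if mu j > 0 then inverse (mu j) else 0)"
  have tnn: "(\<Sum>j\<in>UNIV. if mu j > 0 then inverse (mu j) else 0) \<ge> 0"
    by (intro sum_nonneg) auto
  hence t1: "t \<ge> 1" unfolding t_def by simp
  have tb: "t * mu j \<ge> 1" if "mu j > 0" for j
  proof -
    have "inverse (mu j) \<le> (\<Sum>j\<in>UNIV. if mu j > 0 then inverse (mu j) else 0)"
      using member_le_sum[of j UNIV "\<lambda>j. if mu j > 0 then inverse (mu j) else 0"] that by auto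
    hence "inverse (mu j) \<le> t" unfolding t_def by simp
    hence "inverse (mu j) * mu j \<le> t * mu j" using that by (intro mult_right_mono) auto
    thus ?thesis using that by simp
  qed
  define \<alpha>' where "\<alpha>' = (\<lambda>j. if j \<in> ?E \<and> mu j > 0 then (1::real) else 0)"
  have feas: "mip_feasible X Y dmu (\<lambda>j. t * mu j) (\<lambda>i. t * sm i) (\<lambda>r. t * sp r) t \<alpha>' 1"
  proof -
    have e1: "\<forall>i. (\<Sum>j\<in>?E. X i j * (t * mu j)) + t * sm i - X i dmu * t = 0"
    proof
      fix i
      have "(\<Sum>j\<in>?E. X i j * (t * mu j)) = t * (\<Sum>j\<in>?E. X i j * mu j)"
        by (simp add: sum_distrib_left algebra_simps)
      moreover have h: "(\<Sum>j\<in>?E. X i j * mu j) + sm i = X i dmu" using S unfolding systemS_def by auto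
      moreover have "t * (\<Sum>j\<in>?E. X i j * mu j) + t * sm i = t * X i dmu"
        using h by (metis distrib_left)
      ultimately show "(\<Sum>j\<in>?E. X i j * (t * mu j)) + t * sm i - X i dmu * t = 0"
        by (simp add: mult.commute)
    qed
    have e2: "\<forall>r. (\<Sum>j\<in>?E. Y r j * (t * mu j)) - t * sp r - Y r dmu * t = 0"
    proof
      fix r
      have "(\<Sum>j\<in>?E. Y r j * (t * mu j)) = t * (\<Sum>j\<in>?E. Y r j * mu j)"
        by (simp add: sum_distrib_left algebra_simps)
      moreover have "(\<Sum>j\<in>?E. Y r j * mu j) - sp r = Y r dmu" using S unfolding systemS_def by auto
      moreover have "t * (\<Sum>j\<in>?E. Y r j * mu j) - t * sp r = t * Y r dmu"
        using calculation(2) by (metis right_diff_distrib)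
      ultimately show "(\<Sum>j\<in>?E. Y r j * (t * mu j)) - t * sp r - Y r dmu * t = 0"
        by (simp add: mult.commute)
    qed
    have e3: "(\<Sum>j\<in>?E. t * mu j) - t = 0"
      using S unfolding systemS_def by (simp add: sum_distrib_left[symmetric])
    have e4: "(\<Sum>i\<in>UNIV. Rminus X i * (t * sm i)) + (\<Sum>r\<in>UNIV. Rplus Y r * (t * sp r))
        - (real CARD('i) + real CARD('r)) * (1 - ram_rho X Y dmu) * t = 0"
    proof -
      have "(\<Sum>i\<in>UNIV. Rminus X i * (t * sm i)) + (\<Sum>r\<in>UNIV. Rplus Y r * (t * sp r))
          = t * ((\<Sum>i\<in>UNIV. Rminus X i * sm i) + (\<Sum>r\<in>UNIV. Rplus Y r * sp r))"
        by (simp add: sum_distrib_left algebra_simps)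
      thus ?thesis using S unfolding systemS_def by simp
    qed
    have a: "\<forall>j\<in>?E. \<alpha>' j \<le> t * mu j"
    proof
      fix j assume "j \<in> ?E"
      show "\<alpha>' j \<le> t * mu j"
      proof (cases "mu j > 0")
        case True thus ?thesis using tb \<open>j \<in> ?E\<close> unfolding \<alpha>'_def by auto
      next
        case False
        have "mu j \<ge> 0" using S \<open>j \<in> ?E\<close> unfolding systemS_def by auto
        thus ?thesis using False t1 unfolding \<alpha>'_def by auto
      qed
    qed
    have nn: "\<forall>j\<in>?E. t * mu j \<ge> 0" "\<forall>i. t * sm i \<ge> 0" "\<forall>r. t * sp r \<ge> 0"
      using S t1 unfolding systemS_def by auto
    show ?thesis unfolding mip_feasible_def
      using e1 e2 e3 e4 a nn t1 S unfolding systemS_def \<alpha>'_def by auto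
  qed
  have "mip_obj ?E \<alpha>' 1 = real (num_pos ?E mu) + 1"
    unfolding mip_obj_def num_pos_def \<alpha>'_def
    by (simp add: sum_ind[symmetric] cong: if_cong)
  with feas show ?thesis by blast
qed



theorem theorem1:
  fixes X :: "'i::finite \<Rightarrow> 'j::finite \<Rightarrow> real"
    and Y :: "'r::finite \<Rightarrow> 'j \<Rightarrow> real"
    and dmu :: 'j
    and lam :: "'j \<Rightarrow> real" and sm :: "'i \<Rightarrow> real" and sp :: "'r \<Rightarrow> real"
    and \<delta> :: real and \<alpha> :: "'j \<Rightarrow> real" and \<gamma> :: real
  assumes "\<forall>i j. X i j \<ge> 0" and "\<forall>r j. Y r j \<ge> 0"
    and "mip_optimal X Y dmu lam sm sp \<delta> \<alpha> \<gamma>"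
  shows "maximal_elem X Y dmu (\<lambda>j. lam j / \<delta>)"
proof -
  let ?E = "ram_E X Y"
  have F: "mip_feasible X Y dmu lam sm sp \<delta> \<alpha> \<gamma>" using assms(3) unfolding mip_optimal_def by blast
  have opt: "\<And>mu. mu \<in> Omega X Y dmu \<Longrightarrow> real (num_pos ?E mu) + 1 \<le> mip_obj ?E \<alpha> \<gamma>"
  proof -
    fix mu assume "mu \<in> Omega X Y dmu"
    from Omega_mip[OF this] obtain lam' sm' sp' \<delta>' \<alpha>' where
      "mip_feasible X Y dmu lam' sm' sp' \<delta>' \<alpha>' 1" "mip_obj ?E \<alpha>' 1 = real (num_pos ?E mu) + 1"
      by blast
    thus "real (num_pos ?E mu) + 1 \<le> mip_obj ?E \<alpha> \<gamma>" using assms(3) unfolding mip_optimal_def by metis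
  qed
  obtain mu0 where "mu0 \<in> Omega X Y dmu" using Omega_ne by blast
  from opt[OF this] have obj1: "mip_obj ?E \<alpha> \<gamma> \<ge> 1" by simp
  have lnn: "\<forall>j\<in>?E. lam j \<ge> 0" using F unfolding mip_feasible_def by blast
  have dpos: "\<delta> > 0"
  proof (rule ccontr)
    assume "\<not> \<delta> > 0"
    hence d0: "\<delta> = 0" using F unfolding mip_feasible_def by auto
    have "(\<Sum>j\<in>?E. lam j) = 0" using F d0 unfolding mip_feasible_def by auto
    hence l0: "\<forall>j\<in>?E. lam j = 0" using lnn by (simp add: sum_nonneg_eq_0_iff)
    have "\<forall>j\<in>?E. \<alpha> j = 0" using F l0 unfolding mip_feasible_def by fastforce
    moreover have "\<gamma> = 0" using F d0 unfolding mip_feasible_def by auto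
    ultimately have "mip_obj ?E \<alpha> \<gamma> = 0" unfolding mip_obj_def by simp
    thus False using obj1 by simp
  qed
  have mem: "(\<lambda>j. lam j / \<delta>) \<in> Omega X Y dmu"
  proof -
    have S: "systemS X Y dmu (\<lambda>j. lam j / \<delta>) (\<lambda>i. sm i / \<delta>) (\<lambda>r. sp r / \<delta>)"
    proof -
      have a: "\<forall>i. (\<Sum>j\<in>?E. X i j * (lam j / \<delta>)) + sm i / \<delta> = X i dmu"
      proof
        fix i
        have "(\<Sum>j\<in>?E. X i j * lam j) + sm i = X i dmu * \<delta>" using F unfolding mip_feasible_def by auto
        hence "((\<Sum>j\<in>?E. X i j * lam j) + sm i) / \<delta> = X i dmu" using dpos by simp
        thus "(\<Sum>j\<in>?E. X i j * (lam j / \<delta>)) + sm i / \<delta> = X i dmu"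
          by (simp add: add_divide_distrib sum_divide_distrib)
      qed
      have b: "\<forall>r. (\<Sum>j\<in>?E. Y r j * (lam j / \<delta>)) - sp r / \<delta> = Y r dmu"
      proof
        fix r
        have "(\<Sum>j\<in>?E. Y r j * lam j) - sp r = Y r dmu * \<delta>" using F unfolding mip_feasible_def by auto
        hence "((\<Sum>j\<in>?E. Y r j * lam j) - sp r) / \<delta> = Y r dmu" using dpos by simp
        thus "(\<Sum>j\<in>?E. Y r j * (lam j / \<delta>)) - sp r / \<delta> = Y r dmu"
          by (simp add: diff_divide_distrib sum_divide_distrib)
      qed
      have c: "(\<Sum>j\<in>?E. lam j / \<delta>) = 1"
      proof -
        have "(\<Sum>j\<in>?E. lam j) = \<delta>" using F unfolding mip_feasible_def by auto
        thus ?thesis using dpos by (simp add: sum_divide_distrib[symmetric])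
      qed
      have d: "(\<Sum>i\<in>UNIV. Rminus X i * (sm i / \<delta>)) + (\<Sum>r\<in>UNIV. Rplus Y r * (sp r / \<delta>))
        = (real CARD('i) + real CARD('r)) * (1 - ram_rho X Y dmu)"
      proof -
        have "(\<Sum>i\<in>UNIV. Rminus X i * sm i) + (\<Sum>r\<in>UNIV. Rplus Y r * sp r)
          = (real CARD('i) + real CARD('r)) * (1 - ram_rho X Y dmu) * \<delta>"
          using F unfolding mip_feasible_def by auto
        hence "((\<Sum>i\<in>UNIV. Rminus X i * sm i) + (\<Sum>r\<in>UNIV. Rplus Y r * sp r)) / \<delta>
          = (real CARD('i) + real CARD('r)) * (1 - ram_rho X Y dmu)" using dpos by simp
        thus ?thesis by (simp add: add_divide_distrib sum_divide_distrib)
      qed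
      have e: "\<forall>j. j \<notin> ?E \<longrightarrow> lam j / \<delta> = 0" using F unfolding mip_feasible_def by auto
      have f: "\<forall>j\<in>?E. lam j / \<delta> \<ge> 0" "\<forall>i. sm i / \<delta> \<ge> 0" "\<forall>r. sp r / \<delta> \<ge> 0"
        using F dpos unfolding mip_feasible_def by auto
      show ?thesis unfolding systemS_def using a b c d e f by blast
    qed
    thus ?thesis unfolding Omega_def by blast
  qed
  have np: "num_pos ?E (\<lambda>j. lam j / \<delta>) = num_pos ?E lam"
    unfolding num_pos_def using dpos by (simp add: zero_less_divide_iff)
  have ub: "mip_obj ?E \<alpha> \<gamma> \<le> real (num_pos ?E lam) + 1"
  proof -
    have "(\<Sum>j\<in>?E. \<alpha> j) \<le> (\<Sum>j\<in>?E. if lam j > 0 then 1 else 0)"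
    proof (rule sum_mono)
      fix j assume j: "j \<in> ?E"
      have "\<alpha> j \<in> {0,1}" "\<alpha> j \<le> lam j" using F j unfolding mip_feasible_def by auto
      thus "\<alpha> j \<le> (if lam j > 0 then 1 else 0)" by auto
    qed
    also have "\<dots> = real (num_pos ?E lam)" unfolding num_pos_def by (simp add: sum_ind)
    finally have "(\<Sum>j\<in>?E. \<alpha> j) \<le> real (num_pos ?E lam)" .
    moreover have "\<gamma> \<le> 1" using F unfolding mip_feasible_def by auto
    ultimately show ?thesis unfolding mip_obj_def by simp
  qed
  show ?thesis unfolding maximal_elem_def
  proof (intro conjI ballI mem)
    fix mu assume "mu \<in> Omega X Y dmu"
    from opt[OF this] ub have "real (num_pos ?E mu) \<le> real (num_pos ?E lam)" by simp
    thus "num_pos ?E mu \<le> num_pos ?E (\<lambda>j. lam j / \<delta>)" unfolding np by simp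
  qed
qed


end
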